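(* Let $\Gamma$ be a finite connected $(G,3)$-geodesic-transitive graph of girth $4$ or $5$, where $G\le \mathrm{Aut}(\Gamma)$. Let $N$ be a normal subgroup of $G$ having at least $3$ orbits on $V(\Gamma)$. Then $\Gamma$ is a cover of the normal quotient $\Gamma_N$, the graph $\Gamma_N$ is $(G/N,s')$-geodesic-transitive where $s'=\min\{3,\mathrm{diam}(\Gamma_N)\}$, and one of the following holds: (1) $\Gamma_N$ is a complete graph; (2) $\Gamma_N$ is a $(G/N,2)$-arc-transitive strongly regular graph with girth $4$ or $5$; (3) $\Gamma_N$ has diameter at least $3$ and the same girth as $\Gamma$.
   Context: All graphs are finite, simple and undirected. For a graph $\Gamma$, $d_\Gamma(u,v)$ denotes distance. An $s$-arc is a sequence $(v_0,\dots,v_s)$ of vertices with $v_i,v_{i+1}$ adjacent and $v_{j-1}\neq v_{j+1}$ for $1\le j\le s-1$. An $s$-geodesic is a path $(v_0,\dots,v_s)$ with $d_\Gamma(v_0,v_s)=s$. For $G\le\mathrm{Aut}(\Gamma)$, $\Gamma$ is $(G,s)$-geodesic-transitive if $\Gamma$ has an $s$-geodesic and $G$ is transitive on the set of $i$-geodesics for each $i\le s$ (the $0$-geodesics being vertices); $\Gamma$ is $(G,s)$-arc-transitive if $G$ is transitive on the set of $i$-arcs for each $i\le s$. For $N\trianglelefteq G$, the normal quotient $\Gamma_N$ is the graph whose vertices are the $N$-orbits on $V(\Gamma)$, two distinct orbits $B,C$ being adjacent iff some vertex of $B$ is adjacent to some vertex of $C$; $G/N$ acts on $\Gamma_N$.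 $\Gamma$ is a cover of $\Gamma_N$ if for each edge $\{B,C\}$ of $\Gamma_N$ and each $v\in B$, $v$ is adjacent to exactly one vertex of $C$. A strongly regular graph with parameters $(n,k,a,c)$ is a connected $k$-regular graph on $n$ vertices in which adjacent vertices have $a$ common neighbours and distinct non-adjacent vertices have $c$ common neighbours. *)

theory Defs
  imports "HOL-Algebra.Bij" "HOL-Algebra.Coset"
begin

definition simple_graph :: "'a set \<Rightarrow> ('a \<Rightarrow> 'a \<Rightarrow> bool) \<Rightarrow> bool" where
  "simple_graph V adj \<longleftrightarrow> finite V \<and> (\<forall>x y. adj x y \<longrightarrow> x \<in> V \<and> y \<in> V)
     \<and> (\<forall>x y. adj x y \<longrightarrow> adj y x) \<and> (\<forall>x. \<not> adj x x)"

definition walk :: "'a set \<Rightarrow> ('a \<Rightarrow> 'a \<Rightarrow> bool) \<Rightarrow> 'a list \<Rightarrow> bool" where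
  "walk V adj xs \<longleftrightarrow> xs \<noteq> [] \<and> set xs \<subseteq> V \<and>
     (\<forall>i. i + 1 < length xs \<longrightarrow> adj (xs ! i) (xs ! (i + 1)))"

definition connected_graph :: "'a set \<Rightarrow> ('a \<Rightarrow> 'a \<Rightarrow> bool) \<Rightarrow> bool" where
  "connected_graph V adj \<longleftrightarrow> V \<noteq> {} \<and>
     (\<forall>u\<in>V. \<forall>v\<in>V. \<exists>xs. walk V adj xs \<and> hd xs = u \<and> last xs = v)"

definition gdist :: "'a set \<Rightarrow> ('a \<Rightarrow> 'a \<Rightarrow> bool) \<Rightarrow> 'a \<Rightarrow> 'a \<Rightarrow> nat" where
  "gdist V adj u v = (LEAST n. \<exists>xs. walk V adj xs \<and> length xs = n + 1 \<and> hd xs = u \<and> last xs = v)"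

definition diam :: "'a set \<Rightarrow> ('a \<Rightarrow> 'a \<Rightarrow> bool) \<Rightarrow> nat" where
  "diam V adj = Max {gdist V adj u v | u v. u \<in> V \<and> v \<in> V}"

definition arc :: "'a set \<Rightarrow> ('a \<Rightarrow> 'a \<Rightarrow> bool) \<Rightarrow> nat \<Rightarrow> 'a list \<Rightarrow> bool" where
  "arc V adj s xs \<longleftrightarrow> walk V adj xs \<and> length xs = s + 1 \<and>
     (\<forall>j. 1 \<le> j \<and> j + 1 \<le> s \<longrightarrow> xs ! (j - 1) \<noteq> xs ! (j + 1))"

definition geodesic :: "'a set \<Rightarrow> ('a \<Rightarrow> 'a \<Rightarrow> bool) \<Rightarrow> nat \<Rightarrow> 'a list \<Rightarrow> bool" where
  "geodesic V adj s xs \<longleftrightarrow> walk V adj xs \<and> distinct xs \<and> length xs = s + 1 \<and>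
     gdist V adj (hd xs) (last xs) = s"

definition transitive_on_seqs :: "('a \<Rightarrow> 'a) set \<Rightarrow> 'a list set \<Rightarrow> bool" where
  "transitive_on_seqs H X \<longleftrightarrow> (\<forall>xs\<in>X. \<forall>ys\<in>X. \<exists>h\<in>H. map h xs = ys)"

definition geodesic_transitive ::
  "'a set \<Rightarrow> ('a \<Rightarrow> 'a \<Rightarrow> bool) \<Rightarrow> ('a \<Rightarrow> 'a) set \<Rightarrow> nat \<Rightarrow> bool" where
  "geodesic_transitive V adj H s \<longleftrightarrow> (\<exists>xs. geodesic V adj s xs) \<and>
     (\<forall>i\<le>s. transitive_on_seqs H {xs. geodesic V adj i xs})"

definition arc_transitive ::
  "'a set \<Rightarrow> ('a \<Rightarrow> 'a \<Rightarrow> bool) \<Rightarrow> ('a \<Rightarrow> 'a) set \<Rightarrow> nat \<Rightarrow> bool" where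
  "arc_transitive V adj H s \<longleftrightarrow> (\<forall>i\<le>s. transitive_on_seqs H {xs. arc V adj i xs})"

definition is_cycle :: "'a set \<Rightarrow> ('a \<Rightarrow> 'a \<Rightarrow> bool) \<Rightarrow> 'a list \<Rightarrow> bool" where
  "is_cycle V adj xs \<longleftrightarrow> length xs \<ge> 3 \<and> distinct xs \<and> walk V adj xs \<and> adj (last xs) (hd xs)"

definition has_girth :: "'a set \<Rightarrow> ('a \<Rightarrow> 'a \<Rightarrow> bool) \<Rightarrow> nat \<Rightarrow> bool" where
  "has_girth V adj g \<longleftrightarrow> (\<exists>xs. is_cycle V adj xs \<and> length xs = g) \<and>
     (\<forall>xs. is_cycle V adj xs \<longrightarrow> g \<le> length xs)"

definition complete_graph :: "'a set \<Rightarrow> ('a \<Rightarrow> 'a \<Rightarrow> bool) \<Rightarrow> bool" where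
  "complete_graph V adj \<longleftrightarrow> (\<forall>u\<in>V. \<forall>v\<in>V. u \<noteq> v \<longrightarrow> adj u v)"

definition strongly_regular :: "'a set \<Rightarrow> ('a \<Rightarrow> 'a \<Rightarrow> bool) \<Rightarrow> nat \<Rightarrow> nat \<Rightarrow> nat \<Rightarrow> nat \<Rightarrow> bool" where
  "strongly_regular V adj n k a c \<longleftrightarrow> connected_graph V adj \<and> card V = n \<and>
     (\<forall>v\<in>V. card {w\<in>V. adj v w} = k) \<and>
     (\<forall>u\<in>V. \<forall>v\<in>V. adj u v \<longrightarrow> card {w\<in>V. adj u w \<and> adj v w} = a) \<and>
     (\<forall>u\<in>V. \<forall>v\<in>V. u \<noteq> v \<and> \<not> adj u v \<longrightarrow> card {w\<in>V. adj u w \<and> adj v w} = c)"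

definition aut_subgroup :: "'a set \<Rightarrow> ('a \<Rightarrow> 'a \<Rightarrow> bool) \<Rightarrow> ('a \<Rightarrow> 'a) set \<Rightarrow> bool" where
  "aut_subgroup V adj G \<longleftrightarrow> subgroup G (BijGroup V) \<and>
     (\<forall>g\<in>G. \<forall>x\<in>V. \<forall>y\<in>V. adj x y \<longleftrightarrow> adj (g x) (g y))"

definition orbit_of :: "('a \<Rightarrow> 'a) set \<Rightarrow> 'a \<Rightarrow> 'a set" where
  "orbit_of N v = (\<lambda>g. g v) ` N"

definition quot_V :: "'a set \<Rightarrow> ('a \<Rightarrow> 'a) set \<Rightarrow> 'a set set" where
  "quot_V V N = orbit_of N ` V"

definition quot_adj :: "'a set \<Rightarrow> ('a \<Rightarrow> 'a \<Rightarrow> bool) \<Rightarrow> ('a \<Rightarrow> 'a) set \<Rightarrow> 'a set \<Rightarrow> 'a set \<Rightarrow> bool" where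
  "quot_adj V adj N B C \<longleftrightarrow> B \<in> quot_V V N \<and> C \<in> quot_V V N \<and> B \<noteq> C \<and>
     (\<exists>u\<in>B. \<exists>v\<in>C. adj u v)"

text \<open>The action of G/N on the quotient: the coset gN maps the orbit B to g ` B.\<close>
definition quot_action :: "('a \<Rightarrow> 'a) set \<Rightarrow> ('a set \<Rightarrow> 'a set) set" where
  "quot_action G = (\<lambda>g B. g ` B) ` G"

definition is_cover :: "'a set \<Rightarrow> ('a \<Rightarrow> 'a \<Rightarrow> bool) \<Rightarrow> ('a \<Rightarrow> 'a) set \<Rightarrow> bool" where
  "is_cover V adj N \<longleftrightarrow> (\<forall>B C. quot_adj V adj N B C \<longrightarrow>
     (\<forall>v\<in>B. card {u\<in>C. adj v u} = 1))"

end

theory Submission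
  imports Defs
begin


lemma successively_nth:
  "successively P xs \<longleftrightarrow> (\<forall>i. i + 1 < length xs \<longrightarrow> P (xs ! i) (xs ! (i + 1)))"
proof (induction xs)
  case Nil then show ?case by simp
next
  case (Cons x xs)
  show ?case
  proof (cases xs)
    case Nil then show ?thesis by simp
  next
    case (Cons y ys)
    have "(\<forall>i. i + 1 < length (x # xs) \<longrightarrow> P ((x # xs) ! i) ((x # xs) ! (i + 1))) \<longleftrightarrow>
          P x y \<and> (\<forall>i. i + 1 < length xs \<longrightarrow> P (xs ! i) (xs ! (i + 1)))"
      (is "?L \<longleftrightarrow> ?R")
    proof
      assume L: ?L
      have "P x y" using L[rule_format, of 0] Cons by simp
      moreover have "\<forall>i. i + 1 < length xs \<longrightarrow> P (xs ! i) (xs ! (i + 1))"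
        using L[rule_format, of "Suc _"] by simp
      ultimately show ?R by blast
    next
      assume R: ?R
      show ?L
      proof (intro allI impI)
        fix i assume "i + 1 < length (x # xs)"
        then show "P ((x # xs) ! i) ((x # xs) ! (i + 1))"
          using R Cons by (cases i) auto
      qed
    qed
    then show ?thesis using Cons.IH Cons by simp
  qed
qed

lemma walk_succ: "walk V adj xs \<longleftrightarrow> xs \<noteq> [] \<and> set xs \<subseteq> V \<and> successively adj xs"
  unfolding walk_def successively_nth by simp

lemma walk_single[simp]: "walk V adj [x] \<longleftrightarrow> x \<in> V"
  by (simp add: walk_succ)

lemma walk_Cons2[simp]: "walk V adj (x # y # ys) \<longleftrightarrow> x \<in> V \<and> adj x y \<and> walk V adj (y # ys)"
  by (auto simp: walk_succ)

lemma walk_append: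
  assumes "walk V adj xs" "walk V adj ys" "adj (last xs) (hd ys)"
  shows "walk V adj (xs @ ys)"
  using assms by (auto simp: walk_succ successively_append_iff)

lemma walk_join:
  assumes "walk V adj xs" "walk V adj ys" "last xs = hd ys"
  shows "walk V adj (xs @ tl ys)"
proof (cases "tl ys = []")
  case True then show ?thesis using assms by simp
next
  case False
  then obtain y zs where ys: "ys = y # zs" "zs \<noteq> []" by (cases ys) auto
  then have "adj y (hd zs)" using assms(2) by (cases zs) auto
  moreover have "walk V adj zs" using assms(2) ys by (cases zs) auto
  ultimately show ?thesis using assms ys by (intro walk_append) auto
qed

lemma walk_take: "walk V adj xs \<Longrightarrow> 0 < k \<Longrightarrow> walk V adj (take k xs)"
  by (auto simp: walk_def dest: in_set_takeD)

lemma walk_drop: "walk V adj xs \<Longrightarrow> k < length xs \<Longrightarrow> walk V adj (drop k xs)"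
  by (auto simp: walk_def dest: in_set_dropD)

lemma walk_map:
  assumes "walk V adj xs" "\<And>x. x \<in> V \<Longrightarrow> f x \<in> W" "\<And>x y. adj x y \<Longrightarrow> adj' (f x) (f y)"
  shows "walk W adj' (map f xs)"
  using assms by (auto simp: walk_def)

lemma gdist_le:
  assumes "walk V adj xs" "hd xs = u" "last xs = v"
  shows "gdist V adj u v \<le> length xs - 1"
  unfolding gdist_def
  by (rule Least_le) (use assms in \<open>auto intro!: exI[of _ xs] simp: walk_def\<close>)

lemma gdist_obtain:
  assumes "connected_graph V adj" "u \<in> V" "v \<in> V"
  obtains xs where "walk V adj xs" "length xs = gdist V adj u v + 1" "hd xs = u" "last xs = v"
proof -
  obtain xs where xs: "walk V adj xs" "hd xs = u" "last xs = v"
    using assms unfolding connected_graph_def by blast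
  then have "\<exists>n xs. walk V adj xs \<and> length xs = n + 1 \<and> hd xs = u \<and> last xs = v"
    by (intro exI[of _ "length xs - 1"] exI[of _ xs]) (auto simp: walk_def)
  then have "\<exists>xs. walk V adj xs \<and> length xs = gdist V adj u v + 1 \<and> hd xs = u \<and> last xs = v"
    unfolding gdist_def by (rule LeastI_ex)
  then show ?thesis using that by blast
qed

lemma gdist_self: "u \<in> V \<Longrightarrow> gdist V adj u u = 0"
  using gdist_le[of V adj "[u]" u u] by simp

lemma gdist_0:
  assumes "connected_graph V adj" "u \<in> V" "v \<in> V" "gdist V adj u v = 0"
  shows "u = v"
proof -
  obtain xs where "walk V adj xs" "length xs = 1" "hd xs = u" "last xs = v"
    using gdist_obtain[OF assms(1-3)] assms(4) by auto
  then show ?thesis by (cases xs) auto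
qed

lemma gdist_1:
  assumes "connected_graph V adj" "u \<in> V" "v \<in> V" "gdist V adj u v = 1"
  shows "adj u v"
proof -
  obtain xs where xs: "walk V adj xs" "length xs = gdist V adj u v + 1" "hd xs = u" "last xs = v"
    using gdist_obtain[OF assms(1-3)] by blast
  then have "length xs = 2" using assms(4) by simp
  then obtain a b where "xs = [a,b]" by (metis One_nat_def length_0_conv length_Suc_conv numeral_2_eq_2)
  then show ?thesis using xs by auto
qed

lemma gdist_adj:
  assumes "simple_graph V adj" "connected_graph V adj" "adj u v"
  shows "gdist V adj u v = 1"
proof -
  have uv: "u \<in> V" "v \<in> V" "u \<noteq> v" using assms unfolding simple_graph_def by metis+
  have "gdist V adj u v \<le> 1" using gdist_le[of V adj "[u,v]" u v] uv assms by simp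
  moreover have "gdist V adj u v \<noteq> 0" using gdist_0[OF assms(2) uv(1,2)] uv by blast
  ultimately show ?thesis by simp
qed

lemma shortest_distinct:
  assumes "walk V adj xs" "length xs = gdist V adj (hd xs) (last xs) + 1"
  shows "distinct xs"
proof (rule ccontr)
  assume "\<not> distinct xs"
  then obtain a x b c where xs: "xs = a @ [x] @ b @ [x] @ c"
    using not_distinct_decomp by blast
  let ?ys = "a @ [x] @ c"
  have s: "successively adj ((a @ [x]) @ ((b @ [x]) @ c))" and sv: "set xs \<subseteq> V"
    using assms(1) unfolding xs walk_succ by auto
  have s1: "successively adj (a @ [x])" using s by (simp only: successively_append_iff)
  have s2: "successively adj ((b @ [x]) @ c)" using s by (simp only: successively_append_iff)
  have s3: "successively adj c" "c = [] \<or> adj x (hd c)"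
    using s2 unfolding successively_append_iff by auto
  have gen: "\<And>p. successively adj p \<Longrightarrow> p \<noteq> [] \<Longrightarrow> last p = x \<Longrightarrow> successively adj (p @ c)"
    using s3 by (auto simp: successively_append_iff)
  have "successively adj ((a @ [x]) @ c)" by (rule gen[OF s1]) simp_all
  then have w: "walk V adj ?ys" using sv unfolding walk_succ xs by auto
  have "hd ?ys = hd xs" "last ?ys = last xs" using xs by (cases a; auto)+
  then have "gdist V adj (hd xs) (last xs) \<le> length ?ys - 1" using gdist_le[OF w] by simp
  then show False using assms(2) xs by simp
qed

lemma geodesic_prefix:
  assumes "connected_graph V adj" "u \<in> V" "v \<in> V" "k \<le> gdist V adj u v"
  shows "\<exists>xs. geodesic V adj k xs \<and> hd xs = u"
proof -
  obtain ys where ys: "walk V adj ys" "length ys = gdist V adj u v + 1" "hd ys = u" "last ys = v"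
    using gdist_obtain[OF assms(1-3)] by blast
  let ?xs = "take (k+1) ys"
  have wx: "walk V adj ?xs" using walk_take[OF ys(1)] by simp
  have lx: "length ?xs = k + 1" using ys(2) assms(4) by simp
  have hx: "hd ?xs = u" using ys(3) ys(2) by (cases ys) auto
  have lastx: "last ?xs = ys ! k" proof -
    have "take (k+1) ys \<noteq> []" using ys(2) by (cases ys) auto
    then show ?thesis using ys(2) assms(4) by (simp add: last_conv_nth min_def)
  qed
  have "gdist V adj u (ys ! k) \<le> k" using gdist_le[OF wx hx lastx] lx by simp
  moreover have "\<not> gdist V adj u (ys ! k) < k"
  proof
    assume lt: "gdist V adj u (ys ! k) < k"
    have "set ys \<subseteq> V" using ys(1) unfolding walk_def by blast
    then have yk: "ys ! k \<in> V" using ys(2) assms(4) nth_mem[of k ys] by auto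
    obtain zs where zs: "walk V adj zs" "length zs = gdist V adj u (ys ! k) + 1" "hd zs = u"
        "last zs = ys ! k"
      using gdist_obtain[OF assms(1,2) yk] by blast
    have wd: "walk V adj (drop k ys)" using walk_drop[OF ys(1)] ys(2) assms(4) by simp
    have hd: "hd (drop k ys) = ys ! k" using ys(2) assms(4) by (simp add: hd_drop_conv_nth)
    have w: "walk V adj (zs @ tl (drop k ys))" using walk_join[OF zs(1) wd] zs(4) hd by simp
    have "last (zs @ tl (drop k ys)) = v"
    proof (cases "tl (drop k ys) = []")
      case True
      then have "length (drop k ys) = 1" using wd by (cases "drop k ys") (auto simp: walk_def)
      then have "k = gdist V adj u v" using ys(2) by simp
      moreover have "ys \<noteq> []" using ys(2) by (cases ys) auto
      ultimately have "ys ! k = v" using ys(4) ys(2) by (simp add: last_conv_nth)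
      then show ?thesis using True zs(4) by simp
    next
      case False
      obtain a0 rest where dk: "drop k ys = a0 # rest" using wd by (cases "drop k ys") (auto simp: walk_def)
      have "last (drop k ys) = last ys" using ys(2) assms(4) by (simp add: last_drop)
      then have "last (tl (drop k ys)) = last ys" using False dk by simp
      then show ?thesis using False ys(4) by simp
    qed
    moreover have "hd (zs @ tl (drop k ys)) = u" using zs by (cases zs) (auto simp: walk_def)
    ultimately have "gdist V adj u v \<le> length (zs @ tl (drop k ys)) - 1"
      using gdist_le[OF w] by simp
    then show False using lt zs(2) ys(2) assms(4) by simp
  qed
  ultimately have gd: "gdist V adj u (ys ! k) = k" by simp
  have "distinct ?xs" using shortest_distinct[OF wx] lx hx lastx gd by simp
  then show ?thesis using wx lx hx lastx gd unfolding geodesic_def by auto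
qed



locale gts =
  fixes V :: "'a set" and adj :: "'a \<Rightarrow> 'a \<Rightarrow> bool" and G N :: "('a \<Rightarrow> 'a) set"
  assumes sg: "simple_graph V adj"
    and conn: "connected_graph V adj"
    and aut: "aut_subgroup V adj G"
    and gt: "geodesic_transitive V adj G 3"
    and gir: "has_girth V adj 4 \<or> has_girth V adj 5"
    and nor: "N \<lhd> (BijGroup V)\<lparr>carrier := G\<rparr>"
    and three: "card (quot_V V N) \<ge> 3"
begin

abbreviation "orb \<equiv> orbit_of N"

lemma finV: "finite V" using sg by (simp add: simple_graph_def)
lemma adjV: "adj x y \<Longrightarrow> x \<in> V \<and> y \<in> V" using sg by (simp add: simple_graph_def)
lemma adj_sym: "adj x y \<Longrightarrow> adj y x" using sg by (simp add: simple_graph_def)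
lemma adj_irr: "\<not> adj x x" using sg by (simp add: simple_graph_def)

lemma G_Bij: "g \<in> G \<Longrightarrow> g \<in> Bij V"
  using aut subgroup.subset unfolding aut_subgroup_def BijGroup_def by fastforce

lemma G_bij: "g \<in> G \<Longrightarrow> bij_betw g V V"
  using G_Bij by (simp add: Bij_def)

lemma G_V: "g \<in> G \<Longrightarrow> x \<in> V \<Longrightarrow> g x \<in> V"
  using G_bij bij_betwE by blast

lemma G_inj: "g \<in> G \<Longrightarrow> x \<in> V \<Longrightarrow> y \<in> V \<Longrightarrow> g x = g y \<Longrightarrow> x = y"
  using G_bij by (metis bij_betw_iff_bijections)

lemma G_adj: "g \<in> G \<Longrightarrow> x \<in> V \<Longrightarrow> y \<in> V \<Longrightarrow> adj (g x) (g y) \<longleftrightarrow> adj x y"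
  using aut unfolding aut_subgroup_def by blast

lemma G_adj': "g \<in> G \<Longrightarrow> adj x y \<Longrightarrow> adj (g x) (g y)"
  using G_adj adjV by blast

lemma subN: "subgroup N ((BijGroup V)\<lparr>carrier := G\<rparr>)"
  using nor normal_imp_subgroup by blast

lemma grpS: "group ((BijGroup V)\<lparr>carrier := G\<rparr>)"
  using nor normal.axioms(2) by blast

lemma N_G: "n \<in> N \<Longrightarrow> n \<in> G"
  using subgroup.subset[OF subN] by auto

lemma multS: "f \<in> G \<Longrightarrow> g \<in> G \<Longrightarrow> f \<otimes>\<^bsub>(BijGroup V)\<lparr>carrier := G\<rparr>\<^esub> g = compose V f g"
  using G_Bij by (simp add: BijGroup_def)

lemma N_comp: "n \<in> N \<Longrightarrow> m \<in> N \<Longrightarrow> (\<lambda>x\<in>V. n (m x)) \<in> N"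
  using subgroup.m_closed[OF subN, of n m] multS[OF N_G N_G, of n m] by (simp add: compose_def)

lemma N_one: "(\<lambda>x\<in>V. x) \<in> N"
  using subgroup.one_closed[OF subN] by (simp add: BijGroup_def)

lemma N_inv: assumes "n \<in> N" shows "\<exists>m\<in>N. \<forall>v\<in>V. n (m v) = v \<and> m (n v) = v"
proof -
  let ?S = "(BijGroup V)\<lparr>carrier := G\<rparr>"
  let ?m = "inv\<^bsub>?S\<^esub> n"
  have m: "?m \<in> N" using subgroup.m_inv_closed[OF subN assms] .
  have nG: "n \<in> carrier ?S" using N_G assms by simp
  have "n \<otimes>\<^bsub>?S\<^esub> ?m = \<one>\<^bsub>?S\<^esub>" using group.r_inv[OF grpS nG] .
  then have 1: "compose V n ?m = (\<lambda>x\<in>V. x)" using multS[OF N_G[OF assms] N_G[OF m]] by (simp add: BijGroup_def)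
  have "?m \<otimes>\<^bsub>?S\<^esub> n = \<one>\<^bsub>?S\<^esub>" using group.l_inv[OF grpS nG] .
  then have 2: "compose V ?m n = (\<lambda>x\<in>V. x)" using multS[OF N_G[OF m] N_G[OF assms]] by (simp add: BijGroup_def)
  have "\<forall>v\<in>V. n (?m v) = v \<and> ?m (n v) = v"
  proof
    fix v assume "v \<in> V"
    then show "n (?m v) = v \<and> ?m (n v) = v"
      using fun_cong[OF 1, of v] fun_cong[OF 2, of v] by (simp add: compose_def)
  qed
  then show ?thesis using m by blast
qed

lemma coset_eq: "g \<in> G \<Longrightarrow> N #>\<^bsub>(BijGroup V)\<lparr>carrier := G\<rparr>\<^esub> g = g <#\<^bsub>(BijGroup V)\<lparr>carrier := G\<rparr>\<^esub> N"
  using normal.coset_eq[OF nor] by simp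

lemma normal_comm1:
  assumes "g \<in> G" "n \<in> N" shows "\<exists>n'\<in>N. \<forall>v\<in>V. g (n v) = n' (g v)"
proof -
  let ?S = "(BijGroup V)\<lparr>carrier := G\<rparr>"
  have "g \<otimes>\<^bsub>?S\<^esub> n \<in> g <#\<^bsub>?S\<^esub> N" using assms unfolding l_coset_def by blast
  then have "g \<otimes>\<^bsub>?S\<^esub> n \<in> N #>\<^bsub>?S\<^esub> g" using coset_eq[OF assms(1)] by simp
  then obtain n' where n': "n' \<in> N" "g \<otimes>\<^bsub>?S\<^esub> n = n' \<otimes>\<^bsub>?S\<^esub> g" unfolding r_coset_def by blast
  then have "compose V g n = compose V n' g" using multS N_G assms by simp
  then have "\<forall>v\<in>V. g (n v) = n' (g v)" by (metis compose_eq)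
  then show ?thesis using n' by blast
qed

lemma normal_comm2:
  assumes "g \<in> G" "n \<in> N" shows "\<exists>n'\<in>N. \<forall>v\<in>V. n (g v) = g (n' v)"
proof -
  let ?S = "(BijGroup V)\<lparr>carrier := G\<rparr>"
  have "n \<otimes>\<^bsub>?S\<^esub> g \<in> N #>\<^bsub>?S\<^esub> g" using assms unfolding r_coset_def by blast
  then have "n \<otimes>\<^bsub>?S\<^esub> g \<in> g <#\<^bsub>?S\<^esub> N" using coset_eq[OF assms(1)] by simp
  then obtain n' where n': "n' \<in> N" "n \<otimes>\<^bsub>?S\<^esub> g = g \<otimes>\<^bsub>?S\<^esub> n'" unfolding l_coset_def by blast
  then have "compose V n g = compose V g n'" using multS N_G assms by simp
  then have "\<forall>v\<in>V. n (g v) = g (n' v)" by (metis compose_eq)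
  then show ?thesis using n' by blast
qed

lemma orb_self: "v \<in> V \<Longrightarrow> v \<in> orb v"
  using N_one unfolding orbit_of_def by (metis (no_types, lifting) image_eqI restrict_apply')

lemma orb_V: "v \<in> V \<Longrightarrow> orb v \<subseteq> V"
  unfolding orbit_of_def using N_G G_V by blast

lemma orb_eq:
  assumes "v \<in> V" "u \<in> orb v" shows "orb u = orb v"
proof -
  obtain n where n: "n \<in> N" "u = n v" using assms(2) unfolding orbit_of_def by blast
  obtain m where m: "m \<in> N" "\<forall>x\<in>V. n (m x) = x \<and> m (n x) = x" using N_inv[OF n(1)] by blast
  show ?thesis
  proof
    show "orb u \<subseteq> orb v"
    proof
      fix x assume "x \<in> orb u"
      then obtain k where "k \<in> N" "x = k u" unfolding orbit_of_def by blast
      then have "x = (\<lambda>y\<in>V. k (n y)) v" using n assms(1) by simp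
      then show "x \<in> orb v" using N_comp[OF \<open>k \<in> N\<close> n(1)] unfolding orbit_of_def by blast
    qed
  next
    show "orb v \<subseteq> orb u"
    proof
      fix x assume "x \<in> orb v"
      then obtain k where "k \<in> N" "x = k v" unfolding orbit_of_def by blast
      have uV: "u \<in> V" using orb_V assms by blast
      have "v = m u" using m n assms(1) by simp
      then have "x = (\<lambda>y\<in>V. k (m y)) u" using \<open>x = k v\<close> uV by simp
      then show "x \<in> orb u" using N_comp[OF \<open>k \<in> N\<close> m(1)] unfolding orbit_of_def by blast
    qed
  qed
qed

lemma orb_eq_iff: "u \<in> V \<Longrightarrow> v \<in> V \<Longrightarrow> orb u = orb v \<longleftrightarrow> u \<in> orb v"
  using orb_eq orb_self by metis

lemma orb_N: "n \<in> N \<Longrightarrow> v \<in> V \<Longrightarrow> orb (n v) = orb v"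
  using orb_eq unfolding orbit_of_def by blast

lemma orb_img: assumes "g \<in> G" "v \<in> V" shows "g ` orb v = orb (g v)"
proof
  show "g ` orb v \<subseteq> orb (g v)"
  proof
    fix x assume "x \<in> g ` orb v"
    then obtain n where n: "n \<in> N" "x = g (n v)" unfolding orbit_of_def by blast
    obtain n' where "n' \<in> N" "\<forall>v\<in>V. g (n v) = n' (g v)" using normal_comm1[OF assms(1) n(1)] by blast
    then show "x \<in> orb (g v)" using n assms unfolding orbit_of_def by auto
  qed
next
  show "orb (g v) \<subseteq> g ` orb v"
  proof
    fix x assume "x \<in> orb (g v)"
    then obtain n where n: "n \<in> N" "x = n (g v)" unfolding orbit_of_def by blast
    obtain n' where "n' \<in> N" "\<forall>v\<in>V. n (g v) = g (n' v)" using normal_comm2[OF assms(1) n(1)] by blast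
    then show "x \<in> g ` orb v" using n assms unfolding orbit_of_def by auto
  qed
qed

end


lemma walk_closure:
  assumes "walk V adj xs" "P (hd xs)" "\<And>x y. P x \<Longrightarrow> adj x y \<Longrightarrow> P y"
  shows "P (last xs)"
  using assms
proof (induction xs)
  case Nil then show ?case by (simp add: walk_def)
next
  case (Cons x xs)
  show ?case
  proof (cases xs)
    case Nil then show ?thesis using Cons by simp
  next
    case (Cons y ys)
    then have "P y" using Cons.prems by auto
    moreover have "walk V adj xs" using Cons Cons.prems by auto
    ultimately show ?thesis using Cons.IH Cons.prems(3) Cons by auto
  qed
qed

lemma conn_closure:
  assumes "connected_graph V adj" "v0 \<in> V" "P v0" "\<And>x y. P x \<Longrightarrow> adj x y \<Longrightarrow> P y" "v \<in> V"
  shows "P v"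
proof -
  obtain xs where "walk V adj xs" "hd xs = v0" "last xs = v" using assms unfolding connected_graph_def by blast
  then show ?thesis using walk_closure[of V adj xs P] assms by auto
qed

lemma card_le2: "finite X \<Longrightarrow> X \<subseteq> {a, b} \<Longrightarrow> card X \<le> 2"
proof -
  assume a: "finite X" "X \<subseteq> {a, b}"
  have "card X \<le> card {a, b}" using a by (intro card_mono) auto
  moreover have "card {a, b} \<le> 2" by (cases "a = b") auto
  ultimately show ?thesis by simp
qed

context gts begin

lemma gt_trans: "i \<le> 3 \<Longrightarrow> geodesic V adj i xs \<Longrightarrow> geodesic V adj i ys \<Longrightarrow> \<exists>g\<in>G. map g xs = ys"
  using gt unfolding geodesic_transitive_def transitive_on_seqs_def by blast

lemma girth_ge4: "is_cycle V adj xs \<Longrightarrow> 4 \<le> length xs"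
  using gir unfolding has_girth_def by fastforce

lemma no_tri: "adj x y \<Longrightarrow> adj y z \<Longrightarrow> adj z x \<Longrightarrow> False"
proof -
  assume a: "adj x y" "adj y z" "adj z x"
  then have "x \<noteq> y" "y \<noteq> z" "z \<noteq> x" using adj_irr by metis+
  then have "is_cycle V adj [x,y,z]" using a adjV unfolding is_cycle_def by auto
  then show False using girth_ge4 by fastforce
qed

lemma geod1: assumes "adj u v" shows "geodesic V adj 1 [u,v]"
proof -
  have "u \<noteq> v" using assms adj_irr by metis
  moreover have "gdist V adj u v = 1" using gdist_adj[OF sg conn assms] .
  moreover have "u \<in> V" "v \<in> V" using adjV assms by auto
  ultimately show ?thesis using assms unfolding geodesic_def by simp
qed

lemma geod2: assumes "adj u v" "adj v w" "u \<noteq> w" shows "geodesic V adj 2 [u,v,w]"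
proof -
  have V: "u \<in> V" "v \<in> V" "w \<in> V" using assms adjV by auto
  have na: "\<not> adj u w" using no_tri assms adj_sym by blast
  have "gdist V adj u w \<le> 2" using gdist_le[of V adj "[u,v,w]" u w] assms V by simp
  moreover have "gdist V adj u w \<noteq> 0" using gdist_0[OF conn V(1,3)] assms(3) by blast
  moreover have "gdist V adj u w \<noteq> 1" using gdist_1[OF conn V(1,3)] na by blast
  ultimately have "gdist V adj u w = 2" by simp
  moreover have "u \<noteq> v" "v \<noteq> w" using assms adj_irr by metis+
  ultimately show ?thesis using assms V unfolding geodesic_def by simp
qed

lemma exists_edge: "\<exists>x y. adj x y"
proof -
  obtain xs where "geodesic V adj 3 xs" using gt unfolding geodesic_transitive_def by blast
  then have "walk V adj xs" "length xs = 4" unfolding geodesic_def by auto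
  then have "adj (xs ! 0) (xs ! (0 + 1))" unfolding walk_def by simp
  then show ?thesis by blast
qed

lemma quotV_sub: "(\<forall>v\<in>V. orb v \<in> X) \<Longrightarrow> quot_V V N \<subseteq> X"
  unfolding quot_V_def by blast

lemma finQ: "finite (quot_V V N)" unfolding quot_V_def using finV by simp

lemma F1: assumes "adj u w" shows "orb u \<noteq> orb w"
proof
  assume eq: "orb u = orb w"
  have uV: "u \<in> V" using assms adjV by blast
  have cl: "orb x = orb y" if "adj x y" for x y
  proof -
    have "\<exists>g\<in>G. map g [u,w] = [x,y]" by (rule gt_trans[of 1 "[u,w]" "[x,y]", OF _ geod1[OF assms] geod1[OF that]]) simp
    then obtain g where g: "g \<in> G" "map g [u,w] = [x,y]" ..
    then have gx: "g u = x" "g w = y" by auto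
    have wV: "w \<in> V" using assms adjV by blast
    have "orb (g u) = g ` orb u" "orb (g w) = g ` orb w" using orb_img[OF g(1)] uV wV by auto
    then show ?thesis using gx eq by simp
  qed
  have "\<forall>v\<in>V. orb v = orb u"
  proof
    fix v assume "v \<in> V"
    show "orb v = orb u"
      by (rule conn_closure[OF conn uV, of "\<lambda>x. orb x = orb u"]) (use cl \<open>v \<in> V\<close> in auto)
  qed
  then have "quot_V V N \<subseteq> {orb u}" by (intro quotV_sub) simp
  then have "card (quot_V V N) \<le> card {orb u}" using finQ by (intro card_mono) auto
  then have "card (quot_V V N) \<le> 1" by simp
  then show False using three by simp
qed

lemma F2: assumes "adj v u" "adj v w" "u \<noteq> w" shows "orb u \<noteq> orb w"
proof
  assume eq: "orb u = orb w"
  have Qf: "orb x = orb z" if "adj y x" "adj y z" for x y z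
  proof (cases "x = z")
    case True then show ?thesis by simp
  next
    case False
    have "geodesic V adj 2 [u,v,w]" using geod2 assms adj_sym by blast
    moreover have "geodesic V adj 2 [x,y,z]" using geod2 that adj_sym False by blast
    ultimately have "\<exists>g\<in>G. map g [u,v,w] = [x,y,z]" by (intro gt_trans[of 2 "[u,v,w]" "[x,y,z]"]) simp_all
    then obtain g where g: "g \<in> G" "map g [u,v,w] = [x,y,z]" ..
    then have gx: "g u = x" "g w = z" by auto
    have V: "u \<in> V" "w \<in> V" using assms adjV by auto
    have "orb (g u) = g ` orb u" "orb (g w) = g ` orb w" using orb_img[OF g(1)] V by auto
    then show ?thesis using gx eq by simp
  qed
  have NB: "orb y = orb y'" if "orb x = orb x'" "adj x y" "adj x' y'" for x y x' y'
  proof -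
    have xV: "x \<in> V" "x' \<in> V" using that adjV by auto
    have "x' \<in> orb x" using that(1) orb_self xV by metis
    then obtain n where n: "n \<in> N" "x' = n x" unfolding orbit_of_def by blast
    have "adj x' (n y)" using G_adj'[OF N_G[OF n(1)] that(2)] n by simp
    then have "orb (n y) = orb y'" using Qf that(3) by blast
    moreover have "orb (n y) = orb y" using orb_N n adjV that(2) by blast
    ultimately show ?thesis by simp
  qed
  obtain v0 w0 where e: "adj v0 w0" using exists_edge by blast
  have v0: "v0 \<in> V" using e adjV by blast
  have cl: "orb y = orb v0 \<or> orb y = orb w0" if "orb x = orb v0 \<or> orb x = orb w0" "adj x y" for x y
  proof (cases "orb x = orb v0")
    case True
    then have "orb w0 = orb y" using NB[of v0 x w0 y] e that(2) by simp
    then show ?thesis by simp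
  next
    case False
    then have "orb x = orb w0" using that(1) by simp
    then have "orb v0 = orb y" using NB[of w0 x v0 y] e adj_sym that(2) by simp
    then show ?thesis by simp
  qed
  have "\<forall>v\<in>V. orb v = orb v0 \<or> orb v = orb w0"
  proof
    fix v assume "v \<in> V"
    show "orb v = orb v0 \<or> orb v = orb w0"
      by (rule conn_closure[OF conn v0, of "\<lambda>x. orb x = orb v0 \<or> orb x = orb w0"]) (use cl \<open>v \<in> V\<close> in auto)
  qed
  then have "quot_V V N \<subseteq> {orb v0, orb w0}" by (intro quotV_sub) simp
  then have "card (quot_V V N) \<le> 2" using finQ card_le2 by metis
  then show False using three by simp
qed

lemma Q_orb: assumes "B \<in> quot_V V N" "v \<in> B" shows "v \<in> V \<and> orb v = B"
proof -
  obtain b where b: "b \<in> V" "B = orb b" using assms(1) unfolding quot_V_def by blast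
  then have "orb v = orb b" using orb_eq assms(2) by simp
  moreover have "v \<in> V" using orb_V b assms(2) by blast
  ultimately show ?thesis using b by simp
qed

lemma QA_lift: assumes "quot_adj V adj N B C" "v \<in> B" shows "\<exists>u\<in>C. adj v u"
proof -
  obtain u0 w0 where u: "u0 \<in> B" "w0 \<in> C" "adj u0 w0" "B \<in> quot_V V N" "C \<in> quot_V V N"
    using assms(1) unfolding quot_adj_def by blast
  have "orb u0 = B" "orb w0 = C" using Q_orb u by auto
  then have "v \<in> orb u0" using assms(2) by simp
  then obtain n where n: "n \<in> N" "v = n u0" unfolding orbit_of_def by blast
  have "adj v (n w0)" using G_adj'[OF N_G[OF n(1)] u(3)] n by simp
  moreover have "n w0 \<in> C" using \<open>orb w0 = C\<close> n(1) unfolding orbit_of_def by blast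
  ultimately show ?thesis by blast
qed

lemma cover: "is_cover V adj N"
  unfolding is_cover_def
proof (intro allI impI ballI)
  fix B C v assume a: "quot_adj V adj N B C" "v \<in> B"
  obtain u where u: "u \<in> C" "adj v u" using QA_lift[OF a] by blast
  have "C \<in> quot_V V N" using a unfolding quot_adj_def by blast
  have "{x \<in> C. adj v x} = {u}"
  proof safe
    fix x assume x: "x \<in> C" "adj v x"
    show "x = u"
    proof (rule ccontr)
      assume "x \<noteq> u"
      moreover have "orb x = orb u" using Q_orb \<open>C \<in> quot_V V N\<close> x u by metis
      ultimately show False using F2 x u by blast
    qed
  qed (use u in auto)
  then show "card {x \<in> C. adj v x} = 1" by simp
qed

end


lemma geod1_gen: assumes "simple_graph W A" "connected_graph W A" "A u v" shows "geodesic W A 1 [u,v]"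
proof -
  have "u \<noteq> v" using assms(1,3) unfolding simple_graph_def by metis
  moreover have "gdist W A u v = 1" using gdist_adj[OF assms] .
  moreover have "u \<in> W" "v \<in> W" using assms(1,3) unfolding simple_graph_def by auto
  ultimately show ?thesis using assms unfolding geodesic_def by simp
qed

lemma geod0_gen: "u \<in> W \<Longrightarrow> geodesic W A 0 [u]"
  unfolding geodesic_def using gdist_self[of u W A] by simp

lemma geodesic_full:
  assumes "connected_graph W A" "u \<in> W" "v \<in> W"
  shows "\<exists>xs. geodesic W A (gdist W A u v) xs \<and> hd xs = u \<and> last xs = v"
proof -
  obtain xs where xs: "walk W A xs" "length xs = gdist W A u v + 1" "hd xs = u" "last xs = v"
    using gdist_obtain[OF assms] by blast
  then have "distinct xs" using shortest_distinct[OF xs(1)] by simp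
  then show ?thesis using xs unfolding geodesic_def by auto
qed

lemma diam_fin: "finite W \<Longrightarrow> finite {gdist W A u v | u v. u \<in> W \<and> v \<in> W}"
proof -
  assume "finite W"
  have "{gdist W A u v | u v. u \<in> W \<and> v \<in> W} = (\<lambda>(u,v). gdist W A u v) ` (W \<times> W)" by auto
  then show ?thesis using \<open>finite W\<close> by simp
qed

lemma diam_ge: assumes "finite W" "u \<in> W" "v \<in> W" shows "gdist W A u v \<le> diam W A"
proof -
  have "gdist W A u v \<in> {gdist W A u v | u v. u \<in> W \<and> v \<in> W}" using assms by blast
  then show ?thesis unfolding diam_def using Max_ge[OF diam_fin[OF assms(1)]] by blast
qed

lemma diam_attained: assumes "finite W" "W \<noteq> {}" shows "\<exists>u\<in>W. \<exists>v\<in>W. gdist W A u v = diam W A"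
proof -
  have ne: "{gdist W A u v | u v. u \<in> W \<and> v \<in> W} \<noteq> {}" using assms(2) by blast
  have "Max {gdist W A u v | u v. u \<in> W \<and> v \<in> W} \<in> {gdist W A u v | u v. u \<in> W \<and> v \<in> W}"
    using Max_in[OF diam_fin[OF assms(1)] ne] .
  then obtain u v where "u \<in> W" "v \<in> W" "Max {gdist W A u v | u v. u \<in> W \<and> v \<in> W} = gdist W A u v"
    by blast
  then show ?thesis unfolding diam_def by metis
qed

lemma const_of_le:
  assumes "\<And>x y. x \<in> S \<Longrightarrow> y \<in> S \<Longrightarrow> (f x :: nat) \<le> f y"
  shows "\<exists>c. \<forall>x\<in>S. f x = c"
proof (cases "S = {}")
  case True then show ?thesis by blast
next
  case False
  then obtain x0 where "x0 \<in> S" by blast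
  then have "\<forall>x\<in>S. f x = f x0" using assms by (meson antisym)
  then show ?thesis by blast
qed

context gts begin

abbreviation "Q \<equiv> quot_V V N"
abbreviation "QA \<equiv> quot_adj V adj N"

lemma QA_Q: "QA B C \<Longrightarrow> B \<in> Q \<and> C \<in> Q" unfolding quot_adj_def by blast
lemma QA_sym: "QA B C \<Longrightarrow> QA C B" unfolding quot_adj_def by (metis adj_sym)
lemma QA_irr: "\<not> QA B B" unfolding quot_adj_def by blast

lemma sgQ: "simple_graph Q QA"
  unfolding simple_graph_def using finQ QA_Q QA_sym QA_irr by blast

lemma orb_Q: "v \<in> V \<Longrightarrow> orb v \<in> Q" unfolding quot_V_def by blast

lemma proj_adj: assumes "adj u v" shows "QA (orb u) (orb v)"
proof -
  have V: "u \<in> V" "v \<in> V" using assms adjV by auto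
  show ?thesis unfolding quot_adj_def using orb_Q[OF V(1)] orb_Q[OF V(2)] F1[OF assms]
      orb_self[OF V(1)] orb_self[OF V(2)] assms by blast
qed

lemma walk_proj: "walk V adj xs \<Longrightarrow> walk Q QA (map orb xs)"
  by (rule walk_map[of V adj xs orb Q QA]) (auto intro: orb_Q proj_adj)

lemma Vne: "V \<noteq> {}" using conn unfolding connected_graph_def by blast

lemma connQ: "connected_graph Q QA"
  unfolding connected_graph_def
proof (intro conjI ballI)
  show "Q \<noteq> {}" using Vne unfolding quot_V_def by blast
next
  fix B C assume "B \<in> Q" "C \<in> Q"
  then obtain b c where bc: "b \<in> V" "c \<in> V" "B = orb b" "C = orb c" unfolding quot_V_def by blast
  obtain xs where xs: "walk V adj xs" "hd xs = b" "last xs = c" using conn bc unfolding connected_graph_def by blast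
  have ne: "xs \<noteq> []" using xs(1) unfolding walk_def by blast
  show "\<exists>xs. walk Q QA xs \<and> hd xs = B \<and> last xs = C"
    using walk_proj[OF xs(1)] xs bc ne by (intro exI[of _ "map orb xs"]) (simp add: hd_map last_map)
qed

lemma gdistQ_le: assumes "u \<in> V" "v \<in> V" shows "gdist Q QA (orb u) (orb v) \<le> gdist V adj u v"
proof -
  obtain xs where xs: "walk V adj xs" "length xs = gdist V adj u v + 1" "hd xs = u" "last xs = v"
    using gdist_obtain[OF conn assms] by blast
  have ne: "xs \<noteq> []" using xs(1) unfolding walk_def by blast
  have "gdist Q QA (orb u) (orb v) \<le> length (map orb xs) - 1"
    using gdist_le[OF walk_proj[OF xs(1)]] xs ne by (simp add: hd_map last_map)
  then show ?thesis using xs by simp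
qed

lemma walk_lift: "walk Q QA xs \<Longrightarrow> v \<in> hd xs \<Longrightarrow> \<exists>ys. walk V adj ys \<and> map orb ys = xs \<and> hd ys = v"
proof (induction xs arbitrary: v)
  case Nil then show ?case by (simp add: walk_def)
next
  case (Cons x xs)
  show ?case
  proof (cases xs)
    case Nil
    then have "x \<in> Q" using Cons.prems by simp
    then have "v \<in> V \<and> orb v = x" using Q_orb Cons.prems by simp
    then show ?thesis using Nil by (intro exI[of _ "[v]"]) simp
  next
    case (Cons y zs)
    then have xy: "QA x y" "walk Q QA xs" using Cons.prems by auto
    have vx: "v \<in> x" using Cons.prems by simp
    obtain u where u: "u \<in> y" "adj v u" using QA_lift[OF xy(1) vx] by blast
    have "\<exists>ys. walk V adj ys \<and> map orb ys = xs \<and> hd ys = u" using Cons.IH[OF xy(2)] u(1) Cons by simp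
    then obtain ys where ys: "walk V adj ys" "map orb ys = xs" "hd ys = u" by blast
    obtain ys' where ys': "ys = u # ys'" using ys(3) ys(1) unfolding walk_def by (cases ys) auto
    have "orb v = x" using Q_orb[OF _ vx] QA_Q[OF xy(1)] by blast
    moreover have "v \<in> V" using u adjV by blast
    ultimately show ?thesis using ys ys' u by (intro exI[of _ "v # ys"]) simp
  qed
qed

lemma Q_ne: "B \<in> Q \<Longrightarrow> \<exists>v. v \<in> B" unfolding quot_V_def using orb_self by blast

lemma walk_lift': assumes "walk Q QA xs" shows "\<exists>ys. walk V adj ys \<and> map orb ys = xs"
proof -
  have "hd xs \<in> Q" using assms unfolding walk_def by (cases xs) auto
  then obtain v where "v \<in> hd xs" using Q_ne by blast
  then show ?thesis using walk_lift[OF assms] by blast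
qed

lemma gQ: "g \<in> G \<Longrightarrow> B \<in> Q \<Longrightarrow> g ` B \<in> Q"
  unfolding quot_V_def using orb_img G_V by blast

lemma g_inj_Q: assumes "g \<in> G" "B \<in> Q" "C \<in> Q" "g ` B = g ` C" shows "B = C"
proof -
  have "B \<subseteq> V" "C \<subseteq> V" using assms Q_orb by blast+
  moreover have "inj_on g V" using G_bij[OF assms(1)] by (simp add: bij_betw_def)
  ultimately show ?thesis using assms(4) by (simp add: inj_on_image_eq_iff)
qed

lemma gQA: assumes "g \<in> G" "QA B C" shows "QA (g ` B) (g ` C)"
proof -
  have BC: "B \<in> Q" "C \<in> Q" "B \<noteq> C" using assms(2) QA_Q QA_irr by auto
  obtain u v where uv: "u \<in> B" "v \<in> C" "adj u v" using assms(2) unfolding quot_adj_def by blast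
  have "g ` B \<noteq> g ` C" using g_inj_Q[OF assms(1) BC(1,2)] BC(3) by blast
  moreover have "adj (g u) (g v)" using G_adj'[OF assms(1) uv(3)] .
  ultimately show ?thesis unfolding quot_adj_def using gQ[OF assms(1)] BC uv by blast
qed

lemma transfer:
  assumes "g \<in> G" "set xs \<subseteq> V" "map g xs = ys"
  shows "map (\<lambda>B. g ` B) (map orb xs) = map orb ys"
proof -
  have "map (\<lambda>B. g ` B) (map orb xs) = map (\<lambda>x. orb (g x)) xs"
    using assms(2) orb_img[OF assms(1)] by (auto intro!: map_cong)
  also have "\<dots> = map orb ys" using assms(3) by auto
  finally show ?thesis .
qed

lemma geod_lift:
  assumes "geodesic Q QA i xs"
  shows "\<exists>xs'. geodesic V adj i xs' \<and> map orb xs' = xs"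
proof -
  have w: "walk Q QA xs" using assms unfolding geodesic_def by blast
  obtain ys where ys: "walk V adj ys" "map orb ys = xs" using walk_lift'[OF w] by blast
  have ne: "ys \<noteq> []" using ys(1) unfolding walk_def by blast
  have len: "length ys = i + 1" using assms ys(2) unfolding geodesic_def by auto
  have dist: "distinct ys" using assms ys(2) unfolding geodesic_def by (auto simp: distinct_map)
  have V: "hd ys \<in> V" "last ys \<in> V" using ys(1) ne unfolding walk_def by auto
  have "gdist V adj (hd ys) (last ys) \<le> i" using gdist_le[OF ys(1)] len by simp
  moreover have "gdist Q QA (orb (hd ys)) (orb (last ys)) = i"
    using assms ys(2) ne unfolding geodesic_def by (auto simp: hd_map last_map)
  moreover have "gdist Q QA (orb (hd ys)) (orb (last ys)) \<le> gdist V adj (hd ys) (last ys)"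
    using gdistQ_le[OF V] .
  ultimately have "gdist V adj (hd ys) (last ys) = i" by simp
  then show ?thesis using ys len dist unfolding geodesic_def by auto
qed

lemma arc_geod: assumes "arc V adj i xs" "i \<le> 2" shows "geodesic V adj i xs"
proof -
  have w: "walk V adj xs" and len: "length xs = i + 1" using assms unfolding arc_def by auto
  consider "i = 0" | "i = 1" | "i = 2" using assms(2) by linarith
  then show ?thesis
  proof cases
    case 1
    then obtain a where "xs = [a]" using len by (cases xs) auto
    then show ?thesis using w 1 geod0_gen by simp
  next
    case 2
    then obtain a b where "xs = [a,b]" using len
      by (cases xs; cases "tl xs") auto
    then show ?thesis using w 2 geod1 by simp
  next
    case 3
    then obtain a b c where xs: "xs = [a,b,c]" using len
      by (cases xs; cases "tl xs"; cases "tl (tl xs)") auto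
    have "a \<noteq> c" using assms(1) 3 xs unfolding arc_def by (auto dest: spec[of _ 1])
    then show ?thesis using w 3 xs geod2 by simp
  qed
qed

lemma arc_lift:
  assumes "arc Q QA i xs" "i \<le> 2"
  shows "\<exists>xs'. geodesic V adj i xs' \<and> map orb xs' = xs"
proof -
  have w: "walk Q QA xs" using assms unfolding arc_def by blast
  obtain ys where ys: "walk V adj ys" "map orb ys = xs" using walk_lift'[OF w] by blast
  have len: "length ys = i + 1" using assms ys(2) unfolding arc_def by auto
  have "\<forall>j. 1 \<le> j \<and> j + 1 \<le> i \<longrightarrow> ys ! (j - 1) \<noteq> ys ! (j + 1)"
  proof (intro allI impI)
    fix j assume j: "1 \<le> j \<and> j + 1 \<le> i"
    then have "xs ! (j - 1) \<noteq> xs ! (j + 1)" using assms(1) unfolding arc_def by blast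
    then show "ys ! (j - 1) \<noteq> ys ! (j + 1)" using ys(2) len j by auto
  qed
  then have "arc V adj i ys" using ys len unfolding arc_def by blast
  then show ?thesis using arc_geod assms(2) ys(2) by blast
qed

lemma TQ:
  assumes "i \<le> 3" "\<And>xs. P xs \<Longrightarrow> \<exists>xs'. geodesic V adj i xs' \<and> map orb xs' = xs"
  shows "transitive_on_seqs (quot_action G) {xs. P xs}"
  unfolding transitive_on_seqs_def
proof (intro ballI)
  fix xs ys assume "xs \<in> {xs. P xs}" "ys \<in> {xs. P xs}"
  then obtain xs' ys' where a: "geodesic V adj i xs'" "map orb xs' = xs" "geodesic V adj i ys'" "map orb ys' = ys"
    using assms(2) by blast
  obtain g where g: "g \<in> G" "map g xs' = ys'" using gt_trans[OF assms(1) a(1) a(3)] by blast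
  have "set xs' \<subseteq> V" using a(1) unfolding geodesic_def walk_def by blast
  then have "map (\<lambda>B. g ` B) xs = ys" using transfer[OF g(1) _ g(2)] a by simp
  moreover have "(\<lambda>B. g ` B) \<in> quot_action G" unfolding quot_action_def using g(1) by blast
  ultimately show "\<exists>h\<in>quot_action G. map h xs = ys" by blast
qed

lemma TQ_geod: "i \<le> 3 \<Longrightarrow> transitive_on_seqs (quot_action G) {xs. geodesic Q QA i xs}"
  by (rule TQ[of i]) (auto intro: geod_lift)

lemma TQ_arc: "i \<le> 2 \<Longrightarrow> transitive_on_seqs (quot_action G) {xs. arc Q QA i xs}"
  by (rule TQ[of i]) (auto intro: arc_lift)

lemma geod_trans_Q: "geodesic Q QA i xs \<Longrightarrow> geodesic Q QA i ys \<Longrightarrow> i \<le> 3 \<Longrightarrow> \<exists>g\<in>G. map (\<lambda>B. g ` B) xs = ys"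
proof -
  assume a: "geodesic Q QA i xs" "geodesic Q QA i ys" "i \<le> 3"
  have "\<exists>h\<in>quot_action G. map h xs = ys" using TQ_geod[OF a(3)] a(1,2) unfolding transitive_on_seqs_def by blast
  then show ?thesis unfolding quot_action_def by blast
qed

lemma card_common_le:
  assumes "g \<in> G" "X \<in> Q" "Y \<in> Q"
  shows "card {W \<in> Q. QA X W \<and> QA Y W} \<le> card {W \<in> Q. QA (g ` X) W \<and> QA (g ` Y) W}"
proof (rule card_inj_on_le)
  show "inj_on (\<lambda>B. g ` B) {W \<in> Q. QA X W \<and> QA Y W}"
    using g_inj_Q[OF assms(1)] unfolding inj_on_def by blast
  show "(\<lambda>B. g ` B) ` {W \<in> Q. QA X W \<and> QA Y W} \<subseteq> {W \<in> Q. QA (g ` X) W \<and> QA (g ` Y) W}"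
    using gQ[OF assms(1)] gQA[OF assms(1)] by blast
  show "finite {W \<in> Q. QA (g ` X) W \<and> QA (g ` Y) W}" using finQ by simp
qed

end


context gts begin

lemma Qne: "Q \<noteq> {}" using Vne unfolding quot_V_def by blast

lemma QA_gdist1: "QA X Y \<Longrightarrow> gdist Q QA X Y = 1"
  using gdist_adj[OF sgQ connQ] .

lemma match:
  assumes "geodesic V adj i as" "geodesic Q QA i xs" "i \<le> 3"
  shows "\<exists>g\<in>G. map (\<lambda>B. g ` B) (map orb as) = xs"
proof -
  obtain xs' where xs': "geodesic V adj i xs'" "map orb xs' = xs" using geod_lift[OF assms(2)] by blast
  obtain g where g: "g \<in> G" "map g as = xs'" using gt_trans[OF assms(3) assms(1) xs'(1)] by blast
  have "set as \<subseteq> V" using assms(1) unfolding geodesic_def walk_def by blast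
  then show ?thesis using transfer[OF g(1) _ g(2)] xs'(2) g(1) by auto
qed

lemma pair_map:
  assumes "X \<in> Q" "Y \<in> Q" "X' \<in> Q" "Y' \<in> Q" "gdist Q QA X Y = gdist Q QA X' Y'" "gdist Q QA X Y \<le> 3"
  shows "\<exists>g\<in>G. g ` X = X' \<and> g ` Y = Y'"
proof -
  obtain xs where xs: "geodesic Q QA (gdist Q QA X Y) xs" "hd xs = X" "last xs = Y"
    using geodesic_full[OF connQ assms(1,2)] by blast
  obtain ys where ys: "geodesic Q QA (gdist Q QA X Y) ys" "hd ys = X'" "last ys = Y'"
    using geodesic_full[OF connQ assms(3,4)] assms(5) by metis
  have "\<exists>h\<in>quot_action G. map h xs = ys" using TQ_geod[OF assms(6)] xs ys unfolding transitive_on_seqs_def by blast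
  then obtain g where g: "g \<in> G" "map (\<lambda>B. g ` B) xs = ys" unfolding quot_action_def by blast
  have ne: "xs \<noteq> []" using xs unfolding geodesic_def walk_def by blast
  have "hd (map (\<lambda>B. g ` B) xs) = g ` X" "last (map (\<lambda>B. g ` B) xs) = g ` Y"
    using ne xs by (auto simp: hd_map last_map)
  then show ?thesis using g ys by auto
qed

lemma const_card:
  assumes "m \<le> 3"
  shows "\<exists>c. \<forall>X\<in>Q. \<forall>Y\<in>Q. gdist Q QA X Y = m \<longrightarrow> card {W \<in> Q. QA X W \<and> QA Y W} = c"
proof -
  let ?S = "{(X,Y). X \<in> Q \<and> Y \<in> Q \<and> gdist Q QA X Y = m}"
  let ?f = "\<lambda>(X,Y). card {W \<in> Q. QA X W \<and> QA Y W}"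
  have "\<exists>c. \<forall>p\<in>?S. ?f p = c"
  proof (rule const_of_le)
    fix p p' assume "p \<in> ?S" "p' \<in> ?S"
    then obtain X Y X' Y' where pp: "p = (X,Y)" "p' = (X',Y')" "X \<in> Q" "Y \<in> Q" "X' \<in> Q" "Y' \<in> Q"
      "gdist Q QA X Y = m" "gdist Q QA X' Y' = m" by blast
    then obtain g where g: "g \<in> G" "g ` X = X'" "g ` Y = Y'" using pair_map[of X Y X' Y'] assms by auto
    show "?f p \<le> ?f p'" using card_common_le[OF g(1) pp(3,4)] g pp by simp
  qed
  then show ?thesis by auto
qed

lemma not_complete_far:
  assumes "\<not> complete_graph Q QA"
  shows "\<exists>X\<in>Q. \<exists>Y\<in>Q. gdist Q QA X Y \<ge> 2"
proof -
  obtain X Y where XY: "X \<in> Q" "Y \<in> Q" "X \<noteq> Y" "\<not> QA X Y" using assms unfolding complete_graph_def by blast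
  have "gdist Q QA X Y \<noteq> 0" using gdist_0[OF connQ XY(1,2)] XY(3) by blast
  moreover have "gdist Q QA X Y \<noteq> 1" using gdist_1[OF connQ XY(1,2)] XY(4) by blast
  ultimately show ?thesis using XY by (intro bexI[of _ X] bexI[of _ Y]) auto
qed

lemma geodQ_exists:
  assumes "k \<le> diam Q QA" shows "\<exists>xs. geodesic Q QA k xs"
proof -
  obtain X Y where "X \<in> Q" "Y \<in> Q" "gdist Q QA X Y = diam Q QA" using diam_attained[OF finQ Qne] by blast
  then show ?thesis using geodesic_prefix[OF connQ, of X Y k] assms by auto
qed

lemma diamQ_ge2: assumes "\<not> complete_graph Q QA" shows "diam Q QA \<ge> 2"
  using not_complete_far[OF assms] diam_ge[OF finQ] by (meson le_trans)

lemma no_triQ: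
  assumes "\<not> complete_graph Q QA" "QA A B" "QA B C" "QA C A"
  shows False
proof -
  obtain xs where xs: "geodesic Q QA 2 xs" using geodQ_exists diamQ_ge2[OF assms(1)] by blast
  have wq: "walk Q QA [A,B,C]" using assms(2-4) QA_Q by simp
  have ex: "\<exists>ys. walk V adj ys \<and> map orb ys = [A,B,C]" using walk_lift'[OF wq] .
  obtain ls where ls0: "walk V adj ls \<and> map orb ls = [A,B,C]" using ex by (rule exE)
  then have ls: "walk V adj ls" "map orb ls = [A,B,C]" by simp_all
  obtain a b c where abc: "ls = [a,b,c]" using ls(2)
    by (cases ls; cases "tl ls"; cases "tl (tl ls)") auto
  have "a \<noteq> c" using ls(2) abc QA_irr assms(4) by auto
  then have g2: "geodesic V adj 2 [a,b,c]" using ls(1) abc geod2 by simp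
  obtain g where g: "g \<in> G" "map (\<lambda>B. g ` B) (map orb [a,b,c]) = xs" using match[OF g2 xs] by auto
  have "QA (g ` A) (g ` C)" using gQA[OF g(1) QA_sym[OF assms(4)]] .
  moreover have "xs = [g ` A, g ` B, g ` C]" using g(2) ls(2) abc by simp
  ultimately have "gdist Q QA (hd xs) (last xs) = 1" using QA_gdist1 by simp
  then show False using xs unfolding geodesic_def by simp
qed

lemma cycQ_ge4: assumes "\<not> complete_graph Q QA" "is_cycle Q QA xs" shows "4 \<le> length xs"
proof (rule ccontr)
  assume "\<not> 4 \<le> length xs"
  then have "length xs = 3" using assms(2) unfolding is_cycle_def by simp
  then obtain a b c where "xs = [a,b,c]" by (cases xs; cases "tl xs"; cases "tl (tl xs)") auto
  then show False using assms(2) no_triQ[OF assms(1)] unfolding is_cycle_def by auto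
qed

lemma cyc_proj:
  assumes "is_cycle V adj xs" "length xs = 4 \<or> length xs = 5"
  shows "is_cycle Q QA (map orb xs)"
proof -
  have w: "walk Q QA (map orb xs)" using walk_proj assms(1) unfolding is_cycle_def by blast
  have ne: "xs \<noteq> []" using assms(2) by auto
  have la: "QA (last (map orb xs)) (hd (map orb xs))"
    using assms(1) proj_adj ne unfolding is_cycle_def by (simp add: hd_map last_map)
  have "distinct (map orb xs)"
    using assms(2)
  proof
    assume "length xs = 4"
    then obtain a b c d where xs: "xs = [a,b,c,d]"
      by (cases xs; cases "tl xs"; cases "tl (tl xs)"; cases "tl (tl (tl xs))") auto
    then have e: "adj a b" "adj b c" "adj c d" "adj d a" "distinct [a,b,c,d]" using assms(1) unfolding is_cycle_def by auto
    have "orb a \<noteq> orb b" "orb b \<noteq> orb c" "orb c \<noteq> orb d" "orb d \<noteq> orb a" using F1 e by auto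
    moreover have "orb a \<noteq> orb c" using F2[of b a c] e adj_sym by auto
    moreover have "orb b \<noteq> orb d" using F2[of a b d] e adj_sym by auto
    ultimately show ?thesis using xs by auto
  next
    assume "length xs = 5"
    then obtain a b c d f where xs: "xs = [a,b,c,d,f]"
      by (cases xs; cases "tl xs"; cases "tl (tl xs)"; cases "tl (tl (tl xs))"; cases "tl (tl (tl (tl xs)))") auto
    then have e: "adj a b" "adj b c" "adj c d" "adj d f" "adj f a" "distinct [a,b,c,d,f]"
      using assms(1) unfolding is_cycle_def by auto
    have "orb a \<noteq> orb b" "orb b \<noteq> orb c" "orb c \<noteq> orb d" "orb d \<noteq> orb f" "orb f \<noteq> orb a" using F1 e by auto
    moreover have "orb a \<noteq> orb c" using F2[of b a c] e adj_sym by auto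
    moreover have "orb b \<noteq> orb d" using F2[of c b d] e adj_sym by auto
    moreover have "orb c \<noteq> orb f" using F2[of d c f] e adj_sym by auto
    moreover have "orb d \<noteq> orb a" using F2[of f d a] e adj_sym by auto
    moreover have "orb f \<noteq> orb b" using F2[of a f b] e adj_sym by auto
    ultimately show ?thesis using xs by auto
  qed
  then show ?thesis using w la assms(1) unfolding is_cycle_def by simp
qed

lemma girth_cases: obtains g0 where "has_girth V adj g0" "g0 = 4 \<or> g0 = 5"
  using gir by blast

lemma cycQ_exists: assumes "has_girth V adj g0" "g0 = 4 \<or> g0 = 5" shows "\<exists>xs. is_cycle Q QA xs \<and> length xs = g0"
proof -
  obtain xs where "is_cycle V adj xs" "length xs = g0" using assms(1) unfolding has_girth_def by blast
  then show ?thesis using cyc_proj assms(2) by (intro exI[of _ "map orb xs"]) auto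
qed

lemma no_4cycQ:
  assumes "diam Q QA \<ge> 3" "has_girth V adj 5" "is_cycle Q QA xs" "length xs = 4"
  shows False
proof -
  have nc: "\<not> complete_graph Q QA"
  proof
    assume c: "complete_graph Q QA"
    have "\<forall>X\<in>Q. \<forall>Y\<in>Q. gdist Q QA X Y \<le> 1"
    proof (intro ballI)
      fix X Y assume "X \<in> Q" "Y \<in> Q"
      then show "gdist Q QA X Y \<le> 1" using c gdist_self[of X Q QA] QA_gdist1 unfolding complete_graph_def
        by (cases "X = Y") auto
    qed
    moreover obtain X Y where "X \<in> Q" "Y \<in> Q" "gdist Q QA X Y = diam Q QA" using diam_attained[OF finQ Qne] by blast
    ultimately show False using assms(1) by fastforce
  qed
  obtain B0 B1 B2 B3 where xs: "xs = [B0,B1,B2,B3]" using assms(4)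
    by (cases xs; cases "tl xs"; cases "tl (tl xs)"; cases "tl (tl (tl xs))") auto
  have e: "QA B0 B1" "QA B1 B2" "QA B2 B3" "QA B3 B0" "distinct [B0,B1,B2,B3]"
    using assms(3) xs unfolding is_cycle_def by auto
  obtain vs where vs: "walk V adj vs" "map orb vs = xs" using walk_lift'[of xs] assms(3) unfolding is_cycle_def by blast
  obtain v0 v1 v2 v3 where v: "vs = [v0,v1,v2,v3]" using vs(2) xs
    by (cases vs; cases "tl vs"; cases "tl (tl vs)"; cases "tl (tl (tl vs))") auto
  have ob: "orb v0 = B0" "orb v1 = B1" "orb v2 = B2" "orb v3 = B3" using vs(2) v xs by auto
  have dv: "distinct vs" using vs(2) assms(3) unfolding is_cycle_def by (auto simp: distinct_map)
  have adjs: "adj v0 v1" "adj v1 v2" "adj v2 v3" "v0 \<in> V" "v3 \<in> V" using vs(1) v by auto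
  have "gdist V adj (hd vs) (last vs) \<le> length vs - 1" using gdist_le[OF vs(1)] by simp
  then have "gdist V adj v0 v3 \<le> 3" using v by simp
  moreover have "gdist V adj v0 v3 \<noteq> 0" using gdist_0[OF conn adjs(4,5)] dv v by auto
  moreover have "gdist V adj v0 v3 \<noteq> 1"
  proof
    assume "gdist V adj v0 v3 = 1"
    then have "adj v3 v0" using gdist_1[OF conn adjs(4,5)] adj_sym by blast
    then have "is_cycle V adj vs" using vs(1) dv v unfolding is_cycle_def by simp
    then show False using assms(2) v unfolding has_girth_def by fastforce
  qed
  moreover have "gdist V adj v0 v3 \<noteq> 3"
  proof
    assume d3: "gdist V adj v0 v3 = 3"
    then have g3: "geodesic V adj 3 vs" using vs(1) dv v unfolding geodesic_def by simp
    obtain ys where ys: "geodesic Q QA 3 ys" using geodQ_exists assms(1) by blast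
    obtain g where g: "g \<in> G" "map (\<lambda>B. g ` B) (map orb vs) = ys" using match[OF g3 ys] by auto
    have "ys = [g ` B0, g ` B1, g ` B2, g ` B3]" using g(2) vs(2) xs by simp
    moreover have "QA (g ` B0) (g ` B3)" using gQA[OF g(1) QA_sym[OF e(4)]] .
    ultimately have "gdist Q QA (hd ys) (last ys) = 1" using QA_gdist1 by simp
    then show False using ys unfolding geodesic_def by simp
  qed
  ultimately have "gdist V adj v0 v3 = 2" by simp
  moreover obtain ws where ws: "walk V adj ws" "length ws = gdist V adj v0 v3 + 1" "hd ws = v0" "last ws = v3"
    using gdist_obtain[OF conn adjs(4,5)] by blast
  ultimately have "length ws = 3" by simp
  obtain w where "ws = [v0, w, v3]" using \<open>length ws = 3\<close> ws(3,4)
    by (cases ws; cases "tl ws"; cases "tl (tl ws)") auto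
  then have "adj v0 w" "adj w v3" using ws(1) by auto
  then have "QA B0 (orb w)" "QA (orb w) B3" using proj_adj ob by metis+
  then show False using no_triQ[OF nc] e(4) by blast
qed

end


context gts begin

lemma girthQ:
  assumes nc: "\<not> complete_graph Q QA" and g0: "has_girth V adj g0" "g0 = 4 \<or> g0 = 5"
    and no4: "g0 = 5 \<Longrightarrow> \<not> (\<exists>xs. is_cycle Q QA xs \<and> length xs = 4)"
  shows "has_girth Q QA g0"
  unfolding has_girth_def
proof (intro conjI allI impI)
  show "\<exists>xs. is_cycle Q QA xs \<and> length xs = g0" using cycQ_exists[OF g0] .
next
  fix xs assume c: "is_cycle Q QA xs"
  have "4 \<le> length xs" using cycQ_ge4[OF nc c] .
  moreover have "g0 = 5 \<Longrightarrow> length xs \<noteq> 4" using no4 c by blast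
  ultimately show "g0 \<le> length xs" using g0(2) by linarith
qed

lemma main:
  shows "is_cover V adj N
    \<and> geodesic_transitive Q QA (quot_action G) (min 3 (diam Q QA))
    \<and> (complete_graph Q QA
       \<or> ((\<exists>n k a c. strongly_regular Q QA n k a c)
          \<and> arc_transitive Q QA (quot_action G) 2
          \<and> (has_girth Q QA 4 \<or> has_girth Q QA 5))
       \<or> (diam Q QA \<ge> 3
          \<and> (\<exists>g. has_girth V adj g \<and> has_girth Q QA g)))"
proof (intro conjI)
  show "is_cover V adj N" using cover .
next
  show "geodesic_transitive Q QA (quot_action G) (min 3 (diam Q QA))"
    unfolding geodesic_transitive_def
    using geodQ_exists[of "min 3 (diam Q QA)"] TQ_geod by simp
next
  show "complete_graph Q QA
       \<or> ((\<exists>n k a c. strongly_regular Q QA n k a c)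
          \<and> arc_transitive Q QA (quot_action G) 2
          \<and> (has_girth Q QA 4 \<or> has_girth Q QA 5))
       \<or> (diam Q QA \<ge> 3
          \<and> (\<exists>g. has_girth V adj g \<and> has_girth Q QA g))"
  proof (cases "complete_graph Q QA")
    case True then show ?thesis by blast
  next
    case nc: False
    obtain g0 where g0: "has_girth V adj g0" "g0 = 4 \<or> g0 = 5" using girth_cases by blast
    show ?thesis
    proof (cases "diam Q QA \<ge> 3")
      case True
      have "has_girth Q QA g0"
        by (rule girthQ[OF nc g0]) (use no_4cycQ[OF True] g0 in blast)
      then show ?thesis using True g0 by blast
    next
      case False
      then have d2: "diam Q QA = 2" using diamQ_ge2[OF nc] by simp
      have far2: "gdist Q QA u v = 2" if "u \<in> Q" "v \<in> Q" "u \<noteq> v" "\<not> QA u v" for u v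
      proof -
        have "gdist Q QA u v \<noteq> 0" using gdist_0[OF connQ that(1,2)] that(3) by blast
        moreover have "gdist Q QA u v \<noteq> 1" using gdist_1[OF connQ that(1,2)] that(4) by blast
        moreover have "gdist Q QA u v \<le> 2" using diam_ge[OF finQ that(1,2), of QA] d2 by simp
        ultimately show ?thesis by simp
      qed
      obtain k where k: "\<forall>X\<in>Q. \<forall>Y\<in>Q. gdist Q QA X Y = 0 \<longrightarrow> card {W \<in> Q. QA X W \<and> QA Y W} = k"
        using const_card[of 0] by auto
      obtain a where a: "\<forall>X\<in>Q. \<forall>Y\<in>Q. gdist Q QA X Y = 1 \<longrightarrow> card {W \<in> Q. QA X W \<and> QA Y W} = a"
        using const_card[of 1] by auto
      obtain c where c: "\<forall>X\<in>Q. \<forall>Y\<in>Q. gdist Q QA X Y = 2 \<longrightarrow> card {W \<in> Q. QA X W \<and> QA Y W} = c"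
        using const_card[of 2] by auto
      have sr: "strongly_regular Q QA (card Q) k a c"
        unfolding strongly_regular_def
      proof (intro conjI ballI impI)
        show "connected_graph Q QA" using connQ .
        show "card Q = card Q" ..
      next
        fix v assume v: "v \<in> Q"
        have "card {W \<in> Q. QA v W \<and> QA v W} = k" using k v gdist_self[OF v] by blast
        then show "card {w \<in> Q. QA v w} = k" by simp
      next
        fix u v assume "u \<in> Q" "v \<in> Q" "QA u v"
        then show "card {w \<in> Q. QA u w \<and> QA v w} = a" using a QA_gdist1 by blast
      next
        fix u v assume "u \<in> Q" "v \<in> Q" "u \<noteq> v \<and> \<not> QA u v"
        then show "card {w \<in> Q. QA u w \<and> QA v w} = c" using c far2 by blast
      qed
      have at: "arc_transitive Q QA (quot_action G) 2"
        unfolding arc_transitive_def using TQ_arc by simp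
      have gq: "has_girth Q QA 4 \<or> has_girth Q QA 5"
      proof (cases "\<exists>xs. is_cycle Q QA xs \<and> length xs = 4")
        case True
        have "has_girth Q QA 4" unfolding has_girth_def using True cycQ_ge4[OF nc] by blast
        then show ?thesis by blast
      next
        case False
        have "has_girth Q QA g0" by (rule girthQ[OF nc g0]) (use False in blast)
        then show ?thesis using g0(2) by blast
      qed
      show ?thesis using sr at gq by blast
    qed
  qed
qed

end

theorem theorem1p1:
  fixes V :: "'a set" and adj :: "'a \<Rightarrow> 'a \<Rightarrow> bool" and G N :: "('a \<Rightarrow> 'a) set"
  assumes "simple_graph V adj"
    and "connected_graph V adj"
    and "aut_subgroup V adj G"
    and "geodesic_transitive V adj G 3"
    and "has_girth V adj 4 \<or> has_girth V adj 5"
    and "N \<lhd> (BijGroup V)\<lparr>carrier := G\<rparr>"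
    and "card (quot_V V N) \<ge> 3"
  shows "is_cover V adj N
    \<and> geodesic_transitive (quot_V V N) (quot_adj V adj N) (quot_action G)
        (min 3 (diam (quot_V V N) (quot_adj V adj N)))
    \<and> (complete_graph (quot_V V N) (quot_adj V adj N)
       \<or> ((\<exists>n k a c. strongly_regular (quot_V V N) (quot_adj V adj N) n k a c)
          \<and> arc_transitive (quot_V V N) (quot_adj V adj N) (quot_action G) 2
          \<and> (has_girth (quot_V V N) (quot_adj V adj N) 4 \<or> has_girth (quot_V V N) (quot_adj V adj N) 5))
       \<or> (diam (quot_V V N) (quot_adj V adj N) \<ge> 3
          \<and> (\<exists>g. has_girth V adj g \<and> has_girth (quot_V V N) (quot_adj V adj N) g)))"
proof -
  have "gts V adj G N" unfolding gts_def using assms by blast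
  then interpret gts V adj G N .
  show ?thesis using main .
qed


end
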